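(* Let $p\ge1$, $X=\{0,1,\dots,p\}$, and $w=x_1x_2\cdots\in X^\infty\setminus\{0^\infty\}$; for $n\ge1$ let $w_n=x_1\cdots x_n$. Then $|\mathcal P^{w_n}_n|\le|\mathcal P^{w_{n+1}}_{n+1}|$ for every $n$ with $w_n\ne0^n$. Moreover $\lim_{n}|\mathcal P^{w_n}_n|<\infty$ if and only if $w$ is cofinal to a word in $\{0,i\}^\infty$ for some $i\in X$.
   Context: $\mathcal G_{S_p}$ is generated by $e_1,\dots,e_p$ acting on $X^\ast$ by $e_i(0w)=i\,e_i(w)$, $e_i(iw)=0w$, $e_i(jw)=jw$ for $j\notin\{0,i\}$. $\Gamma^p_n$ is the Schreier graph on $X^n$ with an edge labelled $e_j$ joining $v$ and $e_j(v)$ for all $v,j$. An $e_j$-cycle is the $\langle e_j\rangle$-orbit of a vertex with its $e_j$-labelled edges; $C_n^i$ is the $e_i$-cycle with vertex set $\{0,i\}^n$. Let $B_n$ be the bipartite graph whose vertices are the vertices of $\Gamma^p_n$ and the $e$-cycles of length $\ge2$, a vertex being joined to each such cycle containing it ($B_n$ is a tree). Removing $0^n$ from $\Gamma^p_n$ leaves $p$ components; the $i$-th petal contains $C_n^i\setminus\{0^n\}$. For $u\ne0^n$ in the $i$-th petal, the path of cycles $\mathcal P^u_n$ is the sequence of cycles met along the unique path in $B_n$ from $u$ to $C_n^i$, and $|\mathcal P^u_n|$ its number of cycles. Two infinite words are cofinal if they differ in only finitely many positions. *)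

theory Defs
  imports Complex_Main
begin

definition words :: "nat \<Rightarrow> nat \<Rightarrow> nat list set" where
  "words p n = {v. length v = n \<and> set v \<subseteq> {0..p}}"

fun gen :: "nat \<Rightarrow> nat list \<Rightarrow> nat list" where
  "gen i [] = []"
| "gen i (x # v) = (if x = 0 then i # gen i v else if x = i then 0 # v else x # v)"

definition Cset :: "nat \<Rightarrow> nat \<Rightarrow> nat list set" where
  "Cset n i = {v. length v = n \<and> set v \<subseteq> {0, i}}"

definition orbit :: "nat \<Rightarrow> nat list \<Rightarrow> nat list set" where
  "orbit j v = {u. (v, u) \<in> ({(a, b). b = gen j a} \<union> {(a, b). b = gen j a}\<inverse>)\<^sup>*}"

text \<open>An e_j-cycle of length at least 2 in the Schreier graph on X^n, identified by its
  label j and its vertex set.\<close>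
definition is_cycle :: "nat \<Rightarrow> nat \<Rightarrow> nat \<Rightarrow> nat list set \<Rightarrow> bool" where
  "is_cycle p n j S \<longleftrightarrow> j \<in> {1..p} \<and> (\<exists>v\<in>words p n. S = orbit j v) \<and> card S \<ge> 2"

datatype node = Vert "nat list" | Cyc nat "nat list set"

fun is_Cyc :: "node \<Rightarrow> bool" where
  "is_Cyc (Vert _) = False"
| "is_Cyc (Cyc _ _) = True"

definition Badj :: "nat \<Rightarrow> nat \<Rightarrow> node \<Rightarrow> node \<Rightarrow> bool" where
  "Badj p n a b \<longleftrightarrow> (\<exists>v j S. {a, b} = {Vert v, Cyc j S} \<and> v \<in> words p n \<and> is_cycle p n j S \<and> v \<in> S)"

definition Bpath :: "nat \<Rightarrow> nat \<Rightarrow> nat list \<Rightarrow> nat \<Rightarrow> node list \<Rightarrow> bool" where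
  "Bpath p n u i ps \<longleftrightarrow> ps \<noteq> [] \<and> hd ps = Vert u \<and> last ps = Cyc i (Cset n i) \<and>
     distinct ps \<and> successively (Badj p n) ps"

definition Gedge_no0 :: "nat \<Rightarrow> nat \<Rightarrow> (nat list \<times> nat list) set" where
  "Gedge_no0 p n = {(a, b). a \<in> words p n \<and> b \<in> words p n \<and>
      a \<noteq> replicate n 0 \<and> b \<noteq> replicate n 0 \<and>
      (\<exists>j\<in>{1..p}. b = gen j a \<or> a = gen j b)}"

definition in_petal :: "nat \<Rightarrow> nat \<Rightarrow> nat \<Rightarrow> nat list \<Rightarrow> bool" where
  "in_petal p n i u \<longleftrightarrow> i \<in> {1..p} \<and> u \<in> words p n \<and> u \<noteq> replicate n 0 \<and>
     (\<exists>v \<in> Cset n i - {replicate n 0}. (u, v) \<in> (Gedge_no0 p n)\<^sup>*)"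

definition petal_index :: "nat \<Rightarrow> nat \<Rightarrow> nat list \<Rightarrow> nat" where
  "petal_index p n u = (THE i. in_petal p n i u)"

text \<open>The number of cycles |P^u_n| in the path of cycles of u.\<close>
definition path_cycles :: "nat \<Rightarrow> nat \<Rightarrow> nat list \<Rightarrow> nat" where
  "path_cycles p n u = length (filter is_Cyc (THE ps. Bpath p n u (petal_index p n u) ps))"

definition pref :: "(nat \<Rightarrow> nat) \<Rightarrow> nat \<Rightarrow> nat list" where
  "pref w n = map w [0..<n]"

end

theory Submission
  imports Defs
begin

fun pre :: "nat \<Rightarrow> nat list \<Rightarrow> nat" where
  "pre j [] = 0"
| "pre j (x # v) = (if x = 0 \<or> x = j then Suc (pre j v) else 0)"

definition nz :: "nat list \<Rightarrow> bool" where "nz v = (\<exists>x\<in>set v. x \<noteq> 0)"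
definition fnz :: "nat list \<Rightarrow> nat" where "fnz v = hd (filter (\<lambda>x. x \<noteq> 0) v)"
definition lnz :: "nat list \<Rightarrow> nat" where "lnz v = last (filter (\<lambda>x. x \<noteq> 0) v)"
definition key :: "nat list \<Rightarrow> nat" where "key v = pre (fnz v) v"
definition zp :: "nat \<Rightarrow> nat list \<Rightarrow> nat list" where
  "zp j v = replicate (pre j v) 0 @ drop (pre j v) v"
definition vstep :: "nat list \<Rightarrow> nat list" where "vstep v = zp (fnz v) v"
definition blocks :: "nat list \<Rightarrow> nat" where
  "blocks v = length (remdups_adj (filter (\<lambda>x. x \<noteq> 0) v))"
definition Oset :: "nat \<Rightarrow> nat list \<Rightarrow> nat list set" where
  "Oset j v = {u. pre j u = pre j v \<and> drop (pre j v) u = drop (pre j v) v}"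

lemma pre_le: "pre j v \<le> length v"
  by (induction v) auto

lemma pre_append: "set q \<subseteq> {0, j} \<Longrightarrow> pre j (q @ r) = length q + pre j r"
  by (induction q) auto

lemma pre_drop: "pre j (drop (pre j v) v) = 0"
  by (induction v) auto

lemma take_pre: "set (take (pre j v) v) \<subseteq> {0, j}"
  by (induction v) auto

lemma pre_full: "pre j v = length v \<longleftrightarrow> set v \<subseteq> {0, j}"
  by (induction v) auto

lemma drop_pre_Cons: "pre j v < length v \<Longrightarrow> \<exists>y s. drop (pre j v) v = y # s \<and> y \<noteq> 0 \<and> y \<noteq> j"
  by (induction v) auto

lemma gen_pre: "pre j (gen j b) = pre j b \<and> drop (pre j b) (gen j b) = drop (pre j b) b"
  by (induction b) auto

lemma gen_length: "length (gen j v) = length v"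
  by (induction v) auto

lemma gen_set: "set (gen j v) \<subseteq> set v \<union> {0, j}"
  by (induction v) auto

lemma pre_replicate: "pre j (replicate k 0 @ r) = k + pre j r"
  by (induction k) auto

definition Rg :: "nat \<Rightarrow> (nat list \<times> nat list) set" where
  "Rg j = {(a, b). b = gen j a} \<union> {(a, b). b = gen j a}\<inverse>"

lemma orbit_Rg: "orbit j v = {u. (v, u) \<in> (Rg j)\<^sup>*}"
  unfolding orbit_def Rg_def by simp

lemma Rg_sym: "(a, b) \<in> (Rg j)\<^sup>* \<Longrightarrow> (b, a) \<in> (Rg j)\<^sup>*"
proof -
  have "sym (Rg j)" unfolding Rg_def sym_def by auto
  then have "sym ((Rg j)\<^sup>*)" by (rule sym_rtrancl)
  moreover assume "(a, b) \<in> (Rg j)\<^sup>*"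
  ultimately show ?thesis by (meson symD)
qed

lemma Rg_step: "(a, gen j a) \<in> (Rg j)\<^sup>*"
  unfolding Rg_def by auto

lemma Rg_fwd: assumes "j \<noteq> 0" "c \<in> {0, j}" shows "(c # x, c # gen j x) \<in> (Rg j)\<^sup>*"
proof (cases "c = 0")
  case True
  have "(0 # x, j # gen j x) \<in> (Rg j)\<^sup>*" using Rg_step[of "0 # x" j] by simp
  moreover have "(j # gen j x, 0 # gen j x) \<in> (Rg j)\<^sup>*" using Rg_step[of "j # gen j x" j] assms by simp
  ultimately show ?thesis using True by (meson rtrancl_trans)
next
  case False
  then have c: "c = j" using assms by auto
  have "(j # x, 0 # x) \<in> (Rg j)\<^sup>*" using Rg_step[of "j # x" j] assms by simp
  moreover have "(0 # x, j # gen j x) \<in> (Rg j)\<^sup>*" using Rg_step[of "0 # x" j] by simp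
  ultimately show ?thesis using c by (meson rtrancl_trans)
qed

lemma Rg_lift: assumes "(t, t') \<in> (Rg j)\<^sup>*" "j \<noteq> 0" "c \<in> {0, j}"
  shows "(c # t, c # t') \<in> (Rg j)\<^sup>*"
  using assms(1)
proof (induction rule: rtrancl_induct)
  case base
  then show ?case by simp
next
  case (step y z)
  from step.hyps(2) have "z = gen j y \<or> y = gen j z" unfolding Rg_def by auto
  then have "(c # y, c # z) \<in> (Rg j)\<^sup>*"
  proof
    assume "z = gen j y" then show ?thesis using Rg_fwd assms by simp
  next
    assume "y = gen j z" then show ?thesis using Rg_fwd[OF assms(2,3), of z] Rg_sym by simp
  qed
  then show ?case using step.IH by (meson rtrancl_trans)
qed

lemma Rg_zero: assumes "set q \<subseteq> {0, j}" "j \<noteq> 0"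
  shows "(q @ r, replicate (length q) 0 @ r) \<in> (Rg j)\<^sup>*"
  using assms(1)
proof (induction q)
  case Nil
  then show ?case by simp
next
  case (Cons c q)
  then have 1: "(c # q @ r, c # replicate (length q) 0 @ r) \<in> (Rg j)\<^sup>*"
    using Rg_lift assms(2) by simp
  have 2: "(c # replicate (length q) 0 @ r, 0 # replicate (length q) 0 @ r) \<in> (Rg j)\<^sup>*"
  proof (cases "c = 0")
    case False
    then have "c = j" using Cons.prems by auto
    then show ?thesis using Rg_step[of "j # replicate (length q) 0 @ r" j] assms(2) by simp
  qed simp
  show ?case using rtrancl_trans[OF 1 2] by simp
qed

lemma orbit_sub: assumes "u \<in> orbit j v" shows "u \<in> Oset j v"
proof -
  have "(v, u) \<in> (Rg j)\<^sup>*" using assms orbit_Rg by auto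
  then show ?thesis
  proof (induction rule: rtrancl_induct)
    case base
    then show ?case unfolding Oset_def by simp
  next
    case (step y z)
    from step.hyps(2) have "z = gen j y \<or> y = gen j z" unfolding Rg_def by auto
    then show ?case using step.IH gen_pre[of j y] gen_pre[of j z] unfolding Oset_def by auto
  qed
qed

lemma Oset_decomp: assumes "u \<in> Oset j v"
  shows "u = take (pre j v) u @ drop (pre j v) v \<and> set (take (pre j v) u) \<subseteq> {0, j}
     \<and> length (take (pre j v) u) = pre j v"
proof -
  have p: "pre j u = pre j v" and d: "drop (pre j v) u = drop (pre j v) v" using assms unfolding Oset_def by auto
  show ?thesis using take_pre[of j u] pre_le[of j u] p d
    by (metis append_take_drop_id length_take min.absorb2)
qed

lemma Oset_sub: assumes "u \<in> Oset j v" "j \<noteq> 0" shows "u \<in> orbit j v"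
proof -
  let ?k = "pre j v"
  have v: "v \<in> Oset j v" unfolding Oset_def by simp
  from Oset_decomp[OF assms(1)] have u1: "(u, replicate ?k 0 @ drop ?k v) \<in> (Rg j)\<^sup>*"
    using Rg_zero[OF _ assms(2), of "take ?k u" "drop ?k v"] by metis
  from Oset_decomp[OF v] have v1: "(v, replicate ?k 0 @ drop ?k v) \<in> (Rg j)\<^sup>*"
    using Rg_zero[OF _ assms(2), of "take ?k v" "drop ?k v"] by metis
  have "(v, u) \<in> (Rg j)\<^sup>*" using v1 Rg_sym[OF u1] by (meson rtrancl_trans)
  then show ?thesis using orbit_Rg by auto
qed

lemma orbit_eq: "j \<noteq> 0 \<Longrightarrow> orbit j v = Oset j v"
  using orbit_sub Oset_sub by blast

lemma Oset_same: "x \<in> Oset j v \<Longrightarrow> Oset j x = Oset j v"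
  unfolding Oset_def by auto

lemma zp_Oset: "x \<in> Oset j v \<Longrightarrow> zp j x = zp j v"
  unfolding Oset_def zp_def by auto

lemma words_finite: "finite (words p n)"
proof -
  have "words p n = {v. set v \<subseteq> {0..p} \<and> length v = n}" unfolding words_def by auto
  then show ?thesis using finite_lists_length_eq[of "{0..p}" n] by simp
qed

lemma Oset_words: assumes "v \<in> words p n" "j \<le> p" shows "Oset j v \<subseteq> words p n"
proof
  fix u assume u: "u \<in> Oset j v"
  from Oset_decomp[OF u] have d: "u = take (pre j v) u @ drop (pre j v) v"
    "set (take (pre j v) u) \<subseteq> {0, j}" "length (take (pre j v) u) = pre j v" by auto
  have "length u = length (take (pre j v) u @ drop (pre j v) v)" using arg_cong[of _ _ length, OF d(1)] .
  also have "\<dots> = n" using d(3) assms(1) pre_le[of j v] unfolding words_def by simp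
  finally have len: "length u = n" .
  have "set u = set (take (pre j v) u) \<union> set (drop (pre j v) v)" using arg_cong[of _ _ set, OF d(1)] by simp
  moreover have "set (drop (pre j v) v) \<subseteq> {0..p}" using assms(1) set_drop_subset[of "pre j v" v] unfolding words_def by auto
  ultimately have "set u \<subseteq> {0..p}" using d(2) assms(2) by auto
  then show "u \<in> words p n" using len unfolding words_def by simp
qed

lemma is_cycle_orbit: assumes "j \<in> {1..p}" "v \<in> words p n" "pre j v \<ge> 1"
  shows "is_cycle p n j (orbit j v)"
proof -
  let ?k = "pre j v" let ?r = "drop ?k v"
  have j0: "j \<noteq> 0" using assms by auto
  have O: "orbit j v = Oset j v" using orbit_eq[OF j0] .
  have r0: "pre j ?r = 0" by (rule pre_drop)
  define e1 where "e1 = replicate ?k 0 @ ?r"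
  define e2 where "e2 = (j # replicate (?k - 1) 0) @ ?r"
  have "e1 \<in> Oset j v" unfolding e1_def Oset_def using pre_replicate[of j ?k ?r] r0 by simp
  moreover have "e2 \<in> Oset j v"
  proof -
    have l: "length (j # replicate (?k - 1) 0) = ?k" using assms(3) by simp
    have "drop ?k e2 = ?r" unfolding e2_def using l by (metis append_eq_conv_conj)
    moreover have "pre j e2 = ?k" unfolding e2_def using pre_replicate[of j "?k - 1" ?r] r0 assms(3) by simp
    ultimately show ?thesis unfolding Oset_def by simp
  qed
  moreover have "e1 \<noteq> e2"
  proof -
    have "hd e1 \<noteq> hd e2" unfolding e1_def e2_def using assms(3) j0 by (cases "pre j v") auto
    then show ?thesis by metis
  qed
  moreover have fin: "finite (Oset j v)"
    using finite_subset[OF Oset_words[OF assms(2)] words_finite] assms(1) by auto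
  ultimately have "card {e1, e2} \<le> card (Oset j v)"
    by (intro card_mono) auto
  then have "card (orbit j v) \<ge> 2" using \<open>e1 \<noteq> e2\<close> O by simp
  then show ?thesis unfolding is_cycle_def using assms by blast
qed

lemma nz_rep: assumes l: "length u = n" shows "(u \<noteq> replicate n 0) = nz u"
proof -
  have 1: "u = replicate n 0 \<Longrightarrow> \<not> nz u" unfolding nz_def by auto
  have 2: "\<not> nz u \<Longrightarrow> u = replicate n 0" using l unfolding nz_def by (auto intro: replicate_eqI)
  show ?thesis using 1 2 by blast
qed

lemma Oset_nz: assumes "pre j v < length v" "u \<in> Oset j v" shows "nz u"
proof -
  obtain y s where ys: "drop (pre j v) v = y # s" "y \<noteq> 0" using drop_pre_Cons[OF assms(1)] by auto
  have "drop (pre j v) u = y # s" using assms(2) ys unfolding Oset_def by auto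
  then have "y \<in> set (drop (pre j v) u)" by simp
  then have "y \<in> set u" by (rule in_set_dropD)
  then show ?thesis using ys unfolding nz_def by auto
qed

lemma Cset_orbit: assumes "v \<in> Cset n i" "i \<noteq> 0" shows "orbit i v = Cset n i"
proof -
  have pv: "pre i v = n" using assms pre_full[of i v] unfolding Cset_def by auto
  have "Oset i v = Cset n i"
  proof
    show "Oset i v \<subseteq> Cset n i"
    proof
      fix u assume "u \<in> Oset i v"
      then have "pre i u = n" "drop n u = []" using pv assms unfolding Oset_def Cset_def by auto
      then have "length u = n" using pre_le[of i u] by simp
      then show "u \<in> Cset n i" using \<open>pre i u = n\<close> pre_full[of i u] unfolding Cset_def by auto
    qed
  next
    show "Cset n i \<subseteq> Oset i v"
    proof
      fix u assume "u \<in> Cset n i"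
      then have "pre i u = n" "length u = n" using pre_full[of i u] unfolding Cset_def by auto
      then show "u \<in> Oset i v" using pv assms unfolding Oset_def Cset_def by auto
    qed
  qed
  then show ?thesis using orbit_eq[OF assms(2)] by simp
qed

lemma orbit_Gedge: assumes "j \<in> {1..p}" "\<forall>x\<in>orbit j v. x \<in> words p n \<and> x \<noteq> replicate n 0"
  "u \<in> orbit j v" shows "(v, u) \<in> (Gedge_no0 p n)\<^sup>*"
proof -
  have "(v, u) \<in> (Rg j)\<^sup>*" using assms(3) orbit_Rg by auto
  then show ?thesis
  proof (induction rule: rtrancl_induct)
    case base then show ?case by simp
  next
    case (step y z)
    have "y \<in> orbit j v" "z \<in> orbit j v" using step.hyps orbit_Rg by (auto intro: rtrancl_into_rtrancl)
    moreover from step.hyps(2) have "z = gen j y \<or> y = gen j z" unfolding Rg_def by auto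
    ultimately have "(y, z) \<in> Gedge_no0 p n" using assms(1,2) unfolding Gedge_no0_def by blast
    then show ?case using step.IH by (meson rtrancl.rtrancl_into_rtrancl)
  qed
qed

lemma lnz_append: "nz r \<Longrightarrow> lnz (q @ r) = lnz r"
  unfolding lnz_def nz_def by (simp add: filter_empty_conv)

lemma lnz_sub: "set u \<subseteq> {0, j} \<Longrightarrow> nz u \<Longrightarrow> lnz u = j"
proof -
  assume a: "set u \<subseteq> {0, j}" "nz u"
  then have "filter (\<lambda>x. x \<noteq> 0) u \<noteq> []" unfolding nz_def by (simp add: filter_empty_conv)
  moreover have "set (filter (\<lambda>x. x \<noteq> 0) u) \<subseteq> {j}" using a(1) by auto
  ultimately show ?thesis unfolding lnz_def using last_in_set by blast
qed

lemma gen_lnz: assumes "nz a" "nz (gen j a)" shows "lnz (gen j a) = lnz a"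
proof (cases "pre j a < length a")
  case True
  let ?k = "pre j a"
  obtain y s where ys: "drop ?k a = y # s" "y \<noteq> 0" using drop_pre_Cons[OF True] by auto
  have nzr: "nz (drop ?k a)" using ys unfolding nz_def by auto
  have "lnz a = lnz (drop ?k a)" using lnz_append[OF nzr, of "take ?k a"] by simp
  moreover have "lnz (gen j a) = lnz (take ?k (gen j a) @ drop ?k (gen j a))" by simp
  moreover have "\<dots> = lnz (drop ?k (gen j a))"
    using lnz_append[of "drop ?k (gen j a)" "take ?k (gen j a)"] nzr gen_pre[of j a] by simp
  ultimately show ?thesis using gen_pre[of j a] by simp
next
  case False
  then have "pre j a = length a" using pre_le[of j a] by simp
  then have s1: "set a \<subseteq> {0, j}" using pre_full by simp
  have "pre j (gen j a) = length (gen j a)" using gen_pre[of j a] gen_length[of j a] \<open>pre j a = length a\<close> by simp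
  then have s2: "set (gen j a) \<subseteq> {0, j}" using pre_full by simp
  show ?thesis using lnz_sub[OF s1 assms(1)] lnz_sub[OF s2 assms(2)] by simp
qed

lemma Gedge_lnz: assumes "(u, v) \<in> (Gedge_no0 p n)\<^sup>*" "u \<in> words p n" shows "lnz v = lnz u"
  using assms(1)
proof (induction rule: rtrancl_induct)
  case base then show ?case by simp
next
  case (step y z)
  then have w: "y \<in> words p n" "z \<in> words p n" "y \<noteq> replicate n 0" "z \<noteq> replicate n 0"
    and g: "\<exists>j\<in>{1..p}. z = gen j y \<or> y = gen j z" unfolding Gedge_no0_def by auto
  have "nz y" "nz z" using w nz_rep unfolding words_def by auto
  then have "lnz z = lnz y" using g gen_lnz by metis
  then show ?case using step.IH by simp
qed

lemma RA: "F \<noteq> [] \<Longrightarrow> set F \<subseteq> {j} \<Longrightarrow> y \<noteq> j \<Longrightarrow> remdups_adj (F @ y # t) = j # remdups_adj (y # t)"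
proof (induction F)
  case Nil then show ?case by simp
next
  case (Cons a F)
  then show ?case by (cases F) auto
qed

lemma RB: "F \<noteq> [] \<Longrightarrow> set F \<subseteq> {j} \<Longrightarrow> remdups_adj F = [j]"
proof (induction F)
  case Nil then show ?case by simp
next
  case (Cons a F)
  then show ?case by (cases F) auto
qed

lemma filter_nz: "nz v \<Longrightarrow> filter (\<lambda>x. x \<noteq> 0) v \<noteq> []"
  unfolding nz_def by (simp add: filter_empty_conv)

lemma fnz_props: assumes "nz v" shows "fnz v \<noteq> 0 \<and> fnz v \<in> set v"
proof -
  have "fnz v \<in> set (filter (\<lambda>x. x \<noteq> 0) v)" unfolding fnz_def using filter_nz[OF assms] hd_in_set by blast
  then show ?thesis by simp
qed

lemma key_pos: assumes "nz v" shows "key v \<ge> 1"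
proof (cases v)
  case Nil then show ?thesis using assms unfolding nz_def by simp
next
  case (Cons x v')
  then show ?thesis unfolding key_def fnz_def by (cases "x = 0") auto
qed

lemma key_le: "key v \<le> length v"
  unfolding key_def by (rule pre_le)

lemma key_full: assumes "nz v" "key v = length v"
  shows "set v \<subseteq> {0, fnz v} \<and> lnz v = fnz v \<and> blocks v = 1"
proof -
  have "pre (fnz v) v = length v" using assms(2) unfolding key_def .
  then have s: "set v \<subseteq> {0, fnz v}" using pre_full[of "fnz v" v] by simp
  have "set (filter (\<lambda>x. x \<noteq> 0) v) \<subseteq> {fnz v}" using s by (auto simp del: insert_subset)
  then have "remdups_adj (filter (\<lambda>x. x \<noteq> 0) v) = [fnz v]" by (rule RB[OF filter_nz[OF assms(1)]])
  then have "blocks v = 1" unfolding blocks_def by simp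
  then show ?thesis using s lnz_sub[OF s assms(1)] by blast
qed

lemma vstep_props: assumes "nz v" "key v < length v"
  shows "vstep v \<in> Oset (fnz v) v \<and> nz (vstep v) \<and> key v < key (vstep v) \<and> lnz (vstep v) = lnz v
    \<and> blocks v = Suc (blocks (vstep v)) \<and> length (vstep v) = length v"
proof -
  define j where "j = fnz v"
  define k where "k = key v"
  have kj: "k = pre j v" unfolding k_def j_def key_def by simp
  obtain y s where ys: "drop k v = y # s" "y \<noteq> 0" "y \<noteq> j" using drop_pre_Cons[of j v] assms(2) kj
    unfolding key_def j_def by auto
  define T where "T = take k v"
  have T: "set T \<subseteq> {0, j}" unfolding T_def kj by (rule take_pre)
  have v: "v = T @ y # s" unfolding T_def using ys(1) append_take_drop_id[of k v] by simp
  have lT: "length T = k" unfolding T_def using assms(2) k_def by simp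
  have vs: "vstep v = replicate k 0 @ y # s" unfolding vstep_def zp_def using kj ys(1) j_def by simp
  have fv: "filter (\<lambda>x. x \<noteq> 0) v = filter (\<lambda>x. x \<noteq> 0) T @ y # filter (\<lambda>x. x \<noteq> 0) s" using v ys(2) by simp
  have FT: "filter (\<lambda>x. x \<noteq> 0) T \<noteq> []"
  proof
    assume "filter (\<lambda>x. x \<noteq> 0) T = []"
    then have "fnz v = y" unfolding fnz_def using fv by simp
    then show False using ys(3) j_def by simp
  qed
  have FTs: "set (filter (\<lambda>x. x \<noteq> 0) T) \<subseteq> {j}" using T by auto
  have fvs: "filter (\<lambda>x. x \<noteq> 0) (vstep v) = y # filter (\<lambda>x. x \<noteq> 0) s" using vs ys(2) by simp
  have pys: "pre j (y # s) = 0" using ys by simp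
  have 1: "vstep v \<in> Oset j v" unfolding Oset_def using vs pre_replicate[of j k "y # s"] pys kj ys(1) by simp
  have 2: "nz (vstep v)" using vs ys(2) unfolding nz_def by auto
  have "fnz (vstep v) = y" unfolding fnz_def using fvs by simp
  then have 3: "key (vstep v) > k" unfolding key_def using vs pre_replicate[of y k "y # s"] by simp
  have nzy: "nz (y # s)" using ys(2) unfolding nz_def by simp
  have 4: "lnz (vstep v) = lnz v" using vs v lnz_append[OF nzy] by simp
  have 5: "blocks v = Suc (blocks (vstep v))" unfolding blocks_def using fv fvs RA[OF FT FTs ys(3)] by simp
  have 6: "length (vstep v) = length v" using vs v lT by simp
  show ?thesis using 1 2 3 4 5 6 j_def k_def by simp
qed

fun par :: "nat \<Rightarrow> nat \<Rightarrow> node \<Rightarrow> node" where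
  "par n i (Vert v) = (if v = replicate n 0 then Cyc i (Cset n i) else Cyc (fnz v) (orbit (fnz v) v))"
| "par n i (Cyc j S) = (if j = i \<and> S = Cset n i then Cyc 0 {} else Vert (zp j (SOME x. x \<in> S)))"

lemma zp_Cons0: "zp j (0 # v) = 0 # zp j v"
  unfolding zp_def by simp

lemma zp_fnz: "nz v \<Longrightarrow> fnz v \<noteq> j \<Longrightarrow> zp j v = v"
proof (induction v)
  case Nil then show ?case unfolding nz_def by simp
next
  case (Cons x v)
  show ?case
  proof (cases "x = 0")
    case True
    then have "nz v" "fnz v = fnz (x # v)" using Cons.prems unfolding nz_def fnz_def by auto
    then show ?thesis using Cons True zp_Cons0 by simp
  next
    case False
    then have "fnz (x # v) = x" unfolding fnz_def by simp
    then show ?thesis using Cons.prems False unfolding zp_def by simp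
  qed
qed

lemma zp_rep0: "zp j (replicate n 0) = replicate n 0"
proof -
  have "pre j (replicate n 0) = n" by (induction n) auto
  then show ?thesis unfolding zp_def by simp
qed

lemma fnz_Cset: assumes "set v \<subseteq> {0, i}" "nz v" shows "fnz v = i"
  using fnz_props[OF assms(2)] assms(1) by auto

lemma Badj_elim: assumes "Badj p n a b"
  obtains v j S where "(a = Vert v \<and> b = Cyc j S) \<or> (a = Cyc j S \<and> b = Vert v)"
    "v \<in> words p n" "j \<in> {1..p}" "S = orbit j v" "S = Oset j v"
proof -
  obtain v j S where vjS: "{a, b} = {Vert v, Cyc j S}" "v \<in> words p n" "is_cycle p n j S" "v \<in> S"
    using assms unfolding Badj_def by blast
  obtain v' where v': "v' \<in> words p n" "S = orbit j v'" "j \<in> {1..p}" using vjS(3) unfolding is_cycle_def by blast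
  have j0: "j \<noteq> 0" using v' by simp
  have "S = Oset j v'" using v' orbit_eq[OF j0] by simp
  then have "S = Oset j v" using vjS(4) Oset_same by blast
  moreover then have "S = orbit j v" using orbit_eq[OF j0] by simp
  moreover have "(a = Vert v \<and> b = Cyc j S) \<or> (a = Cyc j S \<and> b = Vert v)" using vjS(1)
    by (metis doubleton_eq_iff)
  ultimately show ?thesis using that vjS(2) v'(3) by blast
qed

lemma dich_core: assumes "i \<in> {1..p}" "v \<in> words p n" "j \<in> {1..p}" "S = orbit j v" "S = Oset j v"
  shows "par n i (Vert v) = Cyc j S \<or> par n i (Cyc j S) = Vert v"
proof (cases "j = i \<and> S = Cset n i")
  case True
  then have vC: "v \<in> Cset n i" using assms(5) unfolding Oset_def by auto
  show ?thesis
  proof (cases "v = replicate n 0")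
    case True then show ?thesis using \<open>j = i \<and> S = Cset n i\<close> by simp
  next
    case False
    then have "nz v" using nz_rep assms(2) unfolding words_def by auto
    then have "fnz v = i" using fnz_Cset vC unfolding Cset_def by auto
    moreover have "orbit i v = Cset n i" using Cset_orbit[OF vC] assms(1) by simp
    ultimately show ?thesis using False True by simp
  qed
next
  case False
  have vS: "v \<in> S" using assms(5) unfolding Oset_def by simp
  have xS: "(SOME x. x \<in> S) \<in> S" using vS by (rule someI)
  then have zx: "zp j (SOME x. x \<in> S) = zp j v" using zp_Oset assms(5) by simp
  have pc: "par n i (Cyc j S) = Vert (zp j v)" using False zx by simp
  show ?thesis
  proof (cases "v = replicate n 0")
    case True then show ?thesis using pc zp_rep0 by simp
  next
    case nv: False
    then have nzv: "nz v" using nz_rep assms(2) unfolding words_def by auto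
    show ?thesis
    proof (cases "fnz v = j")
      case True then show ?thesis using nv assms(4) by simp
    next
      case False then show ?thesis using pc zp_fnz[OF nzv False] by simp
    qed
  qed
qed

lemma dich: assumes "i \<in> {1..p}" "Badj p n a b" shows "a = par n i b \<or> b = par n i a"
proof -
  obtain v j S where h: "(a = Vert v \<and> b = Cyc j S) \<or> (a = Cyc j S \<and> b = Vert v)"
    "v \<in> words p n" "j \<in> {1..p}" "S = orbit j v" "S = Oset j v"
    using Badj_elim[OF assms(2)] by blast
  show ?thesis using dich_core[OF assms(1) h(2-5)] h(1) by auto
qed

lemma root_cond: assumes "i \<in> {1..p}" "Badj p n y (Cyc i (Cset n i))"
  shows "par n i y = Cyc i (Cset n i)"
proof -
  have "y = par n i (Cyc i (Cset n i)) \<or> Cyc i (Cset n i) = par n i y" using dich[OF assms] .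
  moreover have "y \<noteq> Cyc 0 {}"
  proof
    assume "y = Cyc 0 {}"
    then show False using assms(2) unfolding Badj_def by (auto simp: doubleton_eq_iff)
  qed
  ultimately show ?thesis by auto
qed

lemma chain_par:
  assumes dch: "\<And>a b. adj a b \<Longrightarrow> a = f b \<or> b = f a"
    and rt: "\<And>y. adj y r \<Longrightarrow> f y = r"
  shows "successively adj ys \<Longrightarrow> distinct ys \<Longrightarrow> ys \<noteq> [] \<Longrightarrow> last ys = r
    \<Longrightarrow> successively (\<lambda>a b. b = f a) ys"
proof (induction ys)
  case Nil then show ?case by simp
next
  case (Cons a ys)
  show ?case
  proof (cases ys)
    case Nil then show ?thesis by simp
  next
    case (Cons b zs)
    have ab: "adj a b" and s: "successively adj ys" using Cons.prems \<open>ys = b # zs\<close> by auto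
    have IH: "successively (\<lambda>a b. b = f a) ys" using Cons.IH Cons.prems s \<open>ys = b # zs\<close> by simp
    have "b = f a"
    proof (rule ccontr)
      assume nb: "b \<noteq> f a"
      then have afb: "a = f b" using dch[OF ab] by blast
      show False
      proof (cases zs)
        case Nil
        then have "b = r" using Cons.prems \<open>ys = b # zs\<close> by simp
        then show False using rt ab nb by blast
      next
        case (Cons c zs')
        then have "c = f b" using IH \<open>ys = b # zs\<close> by simp
        then have "c = a" using afb by simp
        then show False using Cons.prems(2) \<open>ys = b # zs\<close> \<open>zs = c # zs'\<close> by simp
      qed
    qed
    then show ?thesis using IH \<open>ys = b # zs\<close> by simp
  qed
qed

lemma chain_unique:
  "successively (\<lambda>a b. b = f a) xs \<Longrightarrow> successively (\<lambda>a b. b = f a) ys \<Longrightarrow> xs \<noteq> [] \<Longrightarrow> ys \<noteq> []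
   \<Longrightarrow> hd xs = hd ys \<Longrightarrow> last xs = last ys \<Longrightarrow> distinct xs \<Longrightarrow> distinct ys \<Longrightarrow> xs = ys"
proof (induction xs arbitrary: ys)
  case Nil then show ?case by simp
next
  case (Cons a xs)
  obtain ys' where ys: "ys = a # ys'" using Cons.prems by (cases ys) auto
  show ?case
  proof (cases "xs = []")
    case True
    show ?thesis
    proof (cases "ys' = []")
      case False
      then have "last ys \<in> set ys'" using ys by simp
      then show ?thesis using Cons.prems ys True by simp
    qed (use True ys in simp)
  next
    case False
    show ?thesis
    proof (cases "ys' = []")
      case True
      then have "last (a # xs) \<in> set xs" using False by simp
      then show ?thesis using Cons.prems ys True by simp
    next
      case ys'ne: False
      have "hd xs = f a" using Cons.prems(1) False by (cases xs) auto
      moreover have "hd ys' = f a" using Cons.prems(2) ys ys'ne by (cases ys') auto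
      ultimately have "xs = ys'" using Cons.IH[of ys'] Cons.prems ys False ys'ne
        by (simp add: successively_Cons)
      then show ?thesis using ys by simp
    qed
  qed
qed

fun nodekey :: "node \<Rightarrow> nat" where
  "nodekey (Vert v) = key v"
| "nodekey (Cyc j S) = pre j (SOME x. x \<in> S)"

lemma words_len: "u \<in> words p n \<Longrightarrow> length u = n"
  unfolding words_def by simp

lemma fnz_range: assumes "u \<in> words p n" "nz u" shows "fnz u \<in> {1..p}"
  using fnz_props[OF assms(2)] assms(1) unfolding words_def by auto

lemma exist_path: assumes "u \<in> words p n" "nz u"
  shows "\<exists>ps. Bpath p n u (lnz u) ps \<and> length (filter is_Cyc ps) = blocks u
     \<and> (\<forall>x\<in>set ps. key u \<le> nodekey x)"
  using assms
proof (induction "length u - key u" arbitrary: u rule: less_induct)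
  case less
  define j where "j = fnz u"
  have jr: "j \<in> {1..p}" using fnz_range[OF less.prems] j_def by simp
  have j0: "j \<noteq> 0" using jr by simp
  have kp: "pre j u \<ge> 1" using key_pos[OF less.prems(2)] j_def unfolding key_def by simp
  have uO: "u \<in> Oset j u" unfolding Oset_def by simp
  have cyc: "is_cycle p n j (orbit j u)" using is_cycle_orbit[OF jr less.prems(1) kp] .
  have lu: "length u = n" using words_len[OF less.prems(1)] .
  show ?case
  proof (cases "key u < length u")
    case False
    then have kf: "key u = length u" using key_le[of u] by simp
    from key_full[OF less.prems(2) kf] have s: "set u \<subseteq> {0, j}" "lnz u = j" "blocks u = 1"
      using j_def by auto
    have uC: "u \<in> Cset n j" unfolding Cset_def using s lu by simp
    have CO: "orbit j u = Cset n j" using Cset_orbit[OF uC j0] .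
    define ps where "ps = [Vert u, Cyc j (Cset n j)]"
    have adj: "Badj p n (Vert u) (Cyc j (Cset n j))" unfolding Badj_def
      using less.prems(1) cyc CO uC by blast
    have B: "Bpath p n u (lnz u) ps" unfolding Bpath_def ps_def using adj s by simp
    define x0 where "x0 = (SOME x. x \<in> Cset n j)"
    have xC: "x0 \<in> Cset n j" unfolding x0_def using uC by (rule someI)
    then have "length x0 = n" "set x0 \<subseteq> {0, j}" unfolding Cset_def by auto
    then have "pre j x0 = n" using pre_full[of j x0] by simp
    then have "pre j (SOME x. x \<in> Cset n j) = n" unfolding x0_def .
    then have nk: "\<forall>x\<in>set ps. key u \<le> nodekey x" unfolding ps_def using kf lu by simp
    show ?thesis using B nk s(3) unfolding ps_def by (intro exI[of _ ps]) (simp add: ps_def)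
  next
    case True
    define u' where "u' = vstep u"
    from vstep_props[OF less.prems(2) True] have vp: "u' \<in> Oset j u" "nz u'" "key u < key u'"
      "lnz u' = lnz u" "blocks u = Suc (blocks u')" "length u' = length u"
      unfolding u'_def j_def by auto
    have u'w: "u' \<in> words p n" using Oset_words[OF less.prems(1)] vp(1) jr by auto
    have "length u' - key u' < length u - key u" using vp(3,6) key_le[of u'] by simp
    then obtain ps' where ps': "Bpath p n u' (lnz u') ps'" "length (filter is_Cyc ps') = blocks u'"
      "\<forall>x\<in>set ps'. key u' \<le> nodekey x" using less.hyps[OF _ u'w vp(2)] by blast
    define Ob where "Ob = orbit j u"
    have OO: "Ob = Oset j u" unfolding Ob_def using orbit_eq[OF j0] .
    define ps where "ps = Vert u # Cyc j Ob # ps'"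
    have a1: "Badj p n (Vert u) (Cyc j Ob)" unfolding Badj_def Ob_def
      using less.prems(1) cyc uO orbit_eq[OF j0] by blast
    have a2: "Badj p n (Cyc j Ob) (Vert u')" unfolding Badj_def Ob_def
      using u'w cyc vp(1) orbit_eq[OF j0] by (metis insert_commute)
    have hps: "ps' \<noteq> []" "hd ps' = Vert u'" "last ps' = Cyc (lnz u) (Cset n (lnz u))"
      "distinct ps'" "successively (Badj p n) ps'" using ps'(1) vp(4) unfolding Bpath_def by auto
    have succ: "successively (Badj p n) ps" unfolding ps_def using a1 a2 hps
      by (simp add: successively_Cons)
    have xO: "(SOME x. x \<in> Ob) \<in> Ob" using uO OO by (metis someI)
    then have nkO: "nodekey (Cyc j Ob) = key u" using OO j_def unfolding Oset_def key_def by simp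
    have d1: "Vert u \<notin> set ps'" using ps'(3) vp(3) by fastforce
    have d2: "Cyc j Ob \<notin> set ps'" using ps'(3) vp(3) nkO by fastforce
    have dist: "distinct ps" unfolding ps_def using d1 d2 hps(4) by simp
    have B: "Bpath p n u (lnz u) ps" unfolding Bpath_def using succ dist hps unfolding ps_def by simp
    have cnt: "length (filter is_Cyc ps) = blocks u" unfolding ps_def using ps'(2) vp(5) by simp
    have nk: "\<forall>x\<in>set ps. key u \<le> nodekey x" unfolding ps_def using ps'(3) vp(3) nkO by fastforce
    show ?thesis using B cnt nk by blast
  qed
qed

lemma reach: assumes "u \<in> words p n" "nz u"
  shows "\<exists>v\<in>Cset n (lnz u) - {replicate n 0}. (u, v) \<in> (Gedge_no0 p n)\<^sup>*"
  using assms
proof (induction "length u - key u" arbitrary: u rule: less_induct)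
  case less
  define j where "j = fnz u"
  have jr: "j \<in> {1..p}" using fnz_range[OF less.prems] j_def by simp
  have j0: "j \<noteq> 0" using jr by simp
  have lu: "length u = n" using words_len[OF less.prems(1)] .
  show ?case
  proof (cases "key u < length u")
    case False
    then have kf: "key u = length u" using key_le[of u] by simp
    from key_full[OF less.prems(2) kf] have s: "set u \<subseteq> {0, j}" "lnz u = j"
      using j_def by auto
    have uC: "u \<in> Cset n (lnz u)" unfolding Cset_def using s lu by simp
    have "u \<noteq> replicate n 0" using nz_rep[OF lu] less.prems(2) by simp
    then show ?thesis using uC by blast
  next
    case True
    define u' where "u' = vstep u"
    from vstep_props[OF less.prems(2) True] have vp: "u' \<in> Oset j u" "nz u'" "key u < key u'"
      "lnz u' = lnz u" "blocks u = Suc (blocks u')" "length u' = length u"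
      unfolding u'_def j_def by auto
    have u'w: "u' \<in> words p n" using Oset_words[OF less.prems(1)] vp(1) jr by auto
    have "length u' - key u' < length u - key u" using vp(3,6) key_le[of u'] by simp
    then obtain v where v: "v \<in> Cset n (lnz u') - {replicate n 0}" "(u', v) \<in> (Gedge_no0 p n)\<^sup>*"
      using less.hyps[OF _ u'w vp(2)] by blast
    have pk: "pre j u < length u" using True j_def unfolding key_def by simp
    have all: "\<forall>x\<in>orbit j u. x \<in> words p n \<and> x \<noteq> replicate n 0"
    proof
      fix x assume "x \<in> orbit j u"
      then have xO: "x \<in> Oset j u" using orbit_eq[OF j0] by simp
      then have xw: "x \<in> words p n" using Oset_words[OF less.prems(1)] jr by auto
      moreover have "nz x" using Oset_nz[OF pk xO] .
      ultimately show "x \<in> words p n \<and> x \<noteq> replicate n 0" using nz_rep words_len by blast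
    qed
    have "(u, u') \<in> (Gedge_no0 p n)\<^sup>*" using orbit_Gedge[OF jr all] vp(1) orbit_eq[OF j0] by simp
    moreover have "v \<in> Cset n (lnz u) - {replicate n 0}" using v(1) vp(4) by simp
    ultimately show ?thesis using v(2) by (meson rtrancl_trans)
  qed
qed

lemma lnz_range: assumes "u \<in> words p n" "nz u" shows "lnz u \<in> {1..p}"
proof -
  have "lnz u \<in> set (filter (\<lambda>x. x \<noteq> 0) u)" unfolding lnz_def using filter_nz[OF assms(2)] last_in_set by blast
  then show ?thesis using assms(1) unfolding words_def by auto
qed

lemma petal_idx: assumes "u \<in> words p n" "nz u" shows "petal_index p n u = lnz u"
proof -
  have lu: "length u = n" using words_len[OF assms(1)] .
  have ex: "in_petal p n (lnz u) u" unfolding in_petal_def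
    using lnz_range[OF assms] assms reach[OF assms] nz_rep[OF lu] by blast
  have un: "i = lnz u" if ip: "in_petal p n i u" for i
  proof -
    obtain v where v: "v \<in> Cset n i - {replicate n 0}" "(u, v) \<in> (Gedge_no0 p n)\<^sup>*"
      using ip unfolding in_petal_def by blast
    have "lnz v = lnz u" using Gedge_lnz[OF v(2) assms(1)] .
    moreover have "length v = n" "set v \<subseteq> {0, i}" using v(1) unfolding Cset_def by auto
    moreover then have "nz v" using v(1) nz_rep by blast
    ultimately show ?thesis using lnz_sub by metis
  qed
  show ?thesis unfolding petal_index_def using ex un by (metis the_equality)
qed

lemma path_cycles_blocks: assumes "u \<in> words p n" "nz u" shows "path_cycles p n u = blocks u"
proof -
  define i where "i = lnz u"
  have ir: "i \<in> {1..p}" using lnz_range[OF assms] i_def by simp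
  obtain ps0 where ps0: "Bpath p n u i ps0" "length (filter is_Cyc ps0) = blocks u"
    using exist_path[OF assms] i_def by blast
  have chain: "successively (\<lambda>a b. b = par n i a) ps" if "Bpath p n u i ps" for ps
    using chain_par[of "Badj p n" "par n i" "Cyc i (Cset n i)" ps] dich[OF ir] root_cond[OF ir] that
    unfolding Bpath_def by blast
  have un: "ps = ps0" if "Bpath p n u i ps" for ps
    using chain_unique[OF chain[OF that] chain[OF ps0(1)]] that ps0(1) unfolding Bpath_def by simp
  have "(THE ps. Bpath p n u i ps) = ps0" using ps0(1) un by (rule the_equality)
  then show ?thesis unfolding path_cycles_def using petal_idx[OF assms] i_def ps0(2) by simp
qed

lemma RS: "length (remdups_adj (F @ [a])) = length (remdups_adj F) + (if F \<noteq> [] \<and> last F = a then 0 else 1)"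
proof (cases F rule: rev_cases)
  case Nil then show ?thesis by simp
next
  case (snoc G c)
  then show ?thesis using remdups_adj_append_two[of G c a] by simp
qed

definition Fz :: "(nat \<Rightarrow> nat) \<Rightarrow> nat \<Rightarrow> nat list" where
  "Fz w n = filter (\<lambda>x. x \<noteq> 0) (pref w n)"

lemma pref_Suc: "pref w (Suc n) = pref w n @ [w n]"
  unfolding pref_def by simp

lemma Fz_Suc: "Fz w (Suc n) = Fz w n @ (if w n \<noteq> 0 then [w n] else [])"
  unfolding Fz_def pref_Suc by simp

lemma blocks_pref: "blocks (pref w n) = length (remdups_adj (Fz w n))"
  unfolding blocks_def Fz_def by simp

lemma b_step: "blocks (pref w (Suc n)) = blocks (pref w n) +
   (if w n \<noteq> 0 \<and> \<not> (Fz w n \<noteq> [] \<and> last (Fz w n) = w n) then 1 else 0)"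
  unfolding blocks_pref Fz_Suc using RS[of "Fz w n" "w n"] by auto

lemma b_mono: "m \<le> n \<Longrightarrow> blocks (pref w m) \<le> blocks (pref w n)"
  by (rule lift_Suc_mono_le[of "\<lambda>n. blocks (pref w n)"]) (use b_step in auto)

lemma pref_words: "\<forall>k. w k \<le> p \<Longrightarrow> pref w n \<in> words p n"
  unfolding words_def pref_def by auto

lemma pref_len: "length (pref w n) = n"
  unfolding pref_def by simp

lemma bounded_cofinal:
  assumes wp: "\<forall>k. w k \<le> p" and bd: "\<forall>n. blocks (pref w n) \<le> B"
  shows "\<exists>i\<le>p. \<exists>v :: nat \<Rightarrow> nat. (\<forall>k. v k \<in> {0, i}) \<and> finite {k. w k \<noteq> v k}"
proof -
  let ?b = "\<lambda>n. blocks (pref w n)"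
  have "range ?b \<subseteq> {..B}" using bd by auto
  then have fin: "finite (range ?b)" using finite_subset by blast
  obtain K where K: "?b K = Max (range ?b)" using Max_in[OF fin] by auto
  have const: "?b n = ?b K" if "n \<ge> K" for n
    using b_mono[OF that, of w] K Max_ge[OF fin, of "?b n"] by simp
  define i where "i = (if Fz w K = [] then 0 else last (Fz w K))"
  have P: "(Fz w n = [] \<longrightarrow> i = 0) \<and> (Fz w n \<noteq> [] \<longrightarrow> last (Fz w n) = i)" if "n \<ge> K" for n
    using that
  proof (induction n rule: nat_induct_at_least)
    case base then show ?case unfolding i_def by simp
  next
    case (Suc n)
    have e1: "?b (Suc n) = ?b K" by (rule const) (use Suc.hyps in simp)
    have e2: "?b n = ?b K" by (rule const) (use Suc.hyps in simp)
    have "?b (Suc n) = ?b n" using e1 e2 by simp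
    then have c: "w n = 0 \<or> (Fz w n \<noteq> [] \<and> last (Fz w n) = w n)" using b_step[of w n] by (auto split: if_splits)
    show ?case
    proof (cases "w n = 0")
      case True then show ?thesis using Suc.IH Fz_Suc[of w n] by simp
    next
      case False then show ?thesis using Suc.IH c Fz_Suc[of w n] by auto
    qed
  qed
  have wi: "w n \<in> {0, i}" if "n \<ge> K" for n
  proof (cases "w n = 0")
    case False
    have e1: "?b (Suc n) = ?b K" by (rule const) (use that in simp)
    have e2: "?b n = ?b K" by (rule const) (use that in simp)
    have "?b (Suc n) = ?b n" using e1 e2 by simp
    then have "Fz w n \<noteq> [] \<and> last (Fz w n) = w n" using b_step[of w n] False by (auto split: if_splits)
    then show ?thesis using P[OF that] by simp
  qed simp
  have ip: "i \<le> p"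
  proof (cases "Fz w K = []")
    case False
    then have "last (Fz w K) \<in> set (pref w K)" unfolding Fz_def using last_in_set by fastforce
    then show ?thesis unfolding i_def pref_def using False wp by auto
  qed (simp add: i_def)
  define v where "v k = (if k < K then 0 else w k)" for k
  have "\<forall>k. v k \<in> {0, i}" unfolding v_def using wi by auto
  moreover have "{k. w k \<noteq> v k} \<subseteq> {..<K}" unfolding v_def by auto
  then have "finite {k. w k \<noteq> v k}" using finite_subset by blast
  ultimately show ?thesis using ip by blast
qed


lemma cofinal_bounded:
  assumes v: "\<forall>k. v k \<in> {0, i}" and fin: "finite {k. w k \<noteq> v k}"
  shows "\<exists>B. \<forall>n. blocks (pref w n) \<le> B"
proof -
  obtain K where K: "\<forall>k\<in>{k. w k \<noteq> v k}. k < K" using fin finite_nat_set_iff_bounded by blast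
  have wi: "w k \<in> {0, i}" if "k \<ge> K" for k using K v that by force
  have le: "blocks (pref w n) \<le> n" for n
    unfolding blocks_pref Fz_def using remdups_adj_length[of "filter (\<lambda>x. x \<noteq> 0) (pref w n)"]
      length_filter_le[of "\<lambda>x. x \<noteq> 0" "pref w n"] pref_len[of w n] by linarith
  have inv: "blocks (pref w n) \<le> K + (if Fz w n \<noteq> [] \<and> last (Fz w n) = i then 1 else 0)" if "n \<ge> K" for n
    using that
  proof (induction n rule: nat_induct_at_least)
    case base then show ?case using le[of K] by simp
  next
    case (Suc n)
    show ?case
    proof (cases "w n = 0")
      case True then show ?thesis using Suc.IH b_step[of w n] Fz_Suc[of w n] by simp
    next
      case False
      then have "w n = i" using wi[OF Suc.hyps] by simp
      then show ?thesis using Suc.IH b_step[of w n] Fz_Suc[of w n] False by (auto split: if_splits)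
    qed
  qed
  have "blocks (pref w n) \<le> K + 1" for n
  proof (cases "n \<ge> K")
    case True then show ?thesis using inv[OF True] by (auto split: if_splits)
  next
    case False then show ?thesis using le[of n] by simp
  qed
  then show ?thesis by blast
qed

theorem proposition4p12:
  fixes p :: nat and w :: "nat \<Rightarrow> nat"
  assumes "p \<ge> 1" and "\<forall>k. w k \<le> p" and "\<exists>k. w k \<noteq> 0"
  shows "(\<forall>n\<ge>1. pref w n \<noteq> replicate n 0 \<longrightarrow>
            path_cycles p n (pref w n) \<le> path_cycles p (n + 1) (pref w (n + 1)))
         \<and> ((\<exists>L. (\<lambda>n. real (path_cycles p n (pref w n))) \<longlonglongrightarrow> L) \<longleftrightarrow>
            (\<exists>i\<le>p. \<exists>v :: nat \<Rightarrow> nat. (\<forall>k. v k \<in> {0, i}) \<and> finite {k. w k \<noteq> v k}))"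
proof -
  have pc: "path_cycles p n (pref w n) = blocks (pref w n)" if "nz (pref w n)" for n
    using path_cycles_blocks[OF pref_words[OF assms(2)] that] .
  have part1: "\<forall>n\<ge>1. pref w n \<noteq> replicate n 0 \<longrightarrow>
            path_cycles p n (pref w n) \<le> path_cycles p (n + 1) (pref w (n + 1))"
  proof (intro allI impI)
    fix n :: nat assume "n \<ge> 1" "pref w n \<noteq> replicate n 0"
    then have nz1: "nz (pref w n)" using nz_rep[OF pref_len] by blast
    then have nz2: "nz (pref w (n + 1))" using pref_Suc[of w n] unfolding nz_def by auto
    show "path_cycles p n (pref w n) \<le> path_cycles p (n + 1) (pref w (n + 1))"
      using pc[OF nz1] pc[OF nz2] b_mono[of n "n + 1" w] by simp
  qed
  obtain k0 where k0: "w k0 \<noteq> 0" using assms(3) by blast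
  have ev: "\<forall>\<^sub>F n in sequentially. real (path_cycles p n (pref w n)) = real (blocks (pref w n))"
  proof (rule eventually_sequentiallyI[of "Suc k0"])
    fix n assume "Suc k0 \<le> n"
    then have "w k0 \<in> set (pref w n)" unfolding pref_def by auto
    then have "nz (pref w n)" using k0 unfolding nz_def by blast
    then show "real (path_cycles p n (pref w n)) = real (blocks (pref w n))" using pc by simp
  qed
  have conv: "(\<exists>L. (\<lambda>n. real (path_cycles p n (pref w n))) \<longlonglongrightarrow> L) \<longleftrightarrow>
      (\<exists>L. (\<lambda>n. real (blocks (pref w n))) \<longlonglongrightarrow> L)"
    using tendsto_cong[OF ev] by blast
  have bdd: "(\<exists>L. (\<lambda>n. real (blocks (pref w n))) \<longlonglongrightarrow> L) \<longleftrightarrow> (\<exists>B. \<forall>n. blocks (pref w n) \<le> B)"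
  proof
    assume "\<exists>L. (\<lambda>n. real (blocks (pref w n))) \<longlonglongrightarrow> L"
    then have "convergent (\<lambda>n. real (blocks (pref w n)))" unfolding convergent_def by blast
    then have "Bseq (\<lambda>n. real (blocks (pref w n)))" by (rule convergent_imp_Bseq)
    then obtain K where K: "\<forall>n. norm (real (blocks (pref w n))) \<le> K" using BseqE by blast
    have "blocks (pref w n) \<le> nat \<lceil>K\<rceil>" for n
    proof -
      have "real (blocks (pref w n)) \<le> K" using K[rule_format, of n] by simp
      then show ?thesis by linarith
    qed
    then show "\<exists>B. \<forall>n. blocks (pref w n) \<le> B" by blast
  next
    assume "\<exists>B. \<forall>n. blocks (pref w n) \<le> B"
    then obtain B where B: "\<forall>n. blocks (pref w n) \<le> B" by blast
    have "Bseq (\<lambda>n. real (blocks (pref w n)))"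
      by (rule BseqI'[of _ "real B"]) (use B in simp)
    moreover have "\<forall>m n. m \<le> n \<longrightarrow> real (blocks (pref w m)) \<le> real (blocks (pref w n))"
      using b_mono by simp
    ultimately have "convergent (\<lambda>n. real (blocks (pref w n)))" by (rule Bseq_mono_convergent)
    then show "\<exists>L. (\<lambda>n. real (blocks (pref w n))) \<longlonglongrightarrow> L" unfolding convergent_def by blast
  qed
  have cof: "(\<exists>B. \<forall>n. blocks (pref w n) \<le> B) \<longleftrightarrow>
      (\<exists>i\<le>p. \<exists>v :: nat \<Rightarrow> nat. (\<forall>k. v k \<in> {0, i}) \<and> finite {k. w k \<noteq> v k})"
    using bounded_cofinal[OF assms(2)] cofinal_bounded by blast
  show ?thesis using part1 conv bdd cof by blast
qed

end
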